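(* Let $\lambda>0$ and $\delta\in(0,1)$, and let $\mathsf{T}$ be a fixed plane tree with $i\ge 1$ vertices. For each sufficiently large $k$, let $\ell=\lceil\lambda k\rceil$ and $d=\lceil\delta\lambda k\rceil$. Choose uniformly at random a plane tree with $\ell$ vertices whose root has degree $d$. Let $\beta_k(\mathsf{T})$ be the number of its principal subtrees that are isomorphic to $\mathsf{T}$, divided by $d$. Then $\beta_k(\mathsf{T})$ is concentrated at $$\mu_\beta(\mathsf{T})=\frac{(1-\delta)^{i-1}}{(2-\delta)^{2i-1}}.$$
   Context: A plane tree is a rooted tree in which the children of each vertex are linearly ordered. The principal subtrees of a rooted tree are the subtrees rooted at the children of the root; isomorphism is isomorphism of plane trees. A sequence of random variables $(\xi_k)$ is concentrated at a constant $\mu$ if for every $\varepsilon>0$ there is $K$ such that $\mathbb{P}[|\xi_k-\mu|\le\varepsilon]>1-\varepsilon$ for all $k\ge K$. *)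

theory Defs
  imports "HOL-Probability.Probability"
begin

text \<open>Plane trees: a vertex together with the ordered list of its children's subtrees.
  Two plane trees are isomorphic (as plane trees) iff they are equal as values of this datatype.\<close>
datatype ptree = Node "ptree list"

fun nverts :: "ptree \<Rightarrow> nat" where
  "nverts (Node ts) = Suc (sum_list (map nverts ts))"

fun principal_subtrees :: "ptree \<Rightarrow> ptree list" where
  "principal_subtrees (Node ts) = ts"

definition root_degree :: "ptree \<Rightarrow> nat" where
  "root_degree t = length (principal_subtrees t)"

definition trees_with :: "nat \<Rightarrow> nat \<Rightarrow> ptree set" where
  "trees_with l d = {t. nverts t = l \<and> root_degree t = d}"

definition beta_frac :: "nat \<Rightarrow> ptree \<Rightarrow> ptree \<Rightarrow> real" where
  "beta_frac d T t = real (count_list (principal_subtrees t) T) / real d"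

end

theory Submission
  imports Defs
begin

definition Fo :: "nat \<Rightarrow> nat \<Rightarrow> ptree list set" where
  "Fo n d = {ts. length ts = d \<and> sum_list (map nverts ts) = n}"

definition F :: "nat \<Rightarrow> nat \<Rightarrow> nat" where "F n d = card (Fo n d)"

lemma nverts_pos: "nverts t \<ge> 1"
  by (cases t) auto

lemma length_le_sum: "length ts \<le> sum_list (map nverts ts)"
proof (induction ts)
  case Nil then show ?case by simp
next
  case (Cons t ts) then show ?case using nverts_pos[of t] by simp
qed

lemma finite_small: "finite {t. nverts t \<le> n}"
proof (induction n)
  case 0 then show ?case using nverts_pos by (metis (no_types, lifting) Collect_empty_eq le_zero_eq one_neq_zero finite.emptyI)
next
  case (Suc n)
  have "{t. nverts t \<le> Suc n} \<subseteq> Node ` {ts. set ts \<subseteq> {t. nverts t \<le> n} \<and> length ts \<le> n}"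
  proof
    fix t assume "t \<in> {t. nverts t \<le> Suc n}"
    then obtain ts where t: "t = Node ts" and s: "sum_list (map nverts ts) \<le> n"
      by (cases t) auto
    have "set ts \<subseteq> {t. nverts t \<le> n}"
      using s member_le_sum_list[of _ "map nverts ts"] by fastforce
    moreover have "length ts \<le> n" using length_le_sum[of ts] s by simp
    ultimately show "t \<in> Node ` {ts. set ts \<subseteq> {t. nverts t \<le> n} \<and> length ts \<le> n}"
      using t by blast
  qed
  moreover have "finite {ts. set ts \<subseteq> {t. nverts t \<le> n} \<and> length ts \<le> n}"
    using finite_lists_length_le[OF Suc.IH] by simp
  ultimately show ?case by (meson finite_imageI finite_subset)
qed

lemma finite_Fo: "finite (Fo n d)"
proof -
  have "Fo n d \<subseteq> {ts. set ts \<subseteq> {t. nverts t \<le> n} \<and> length ts \<le> n}"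
    unfolding Fo_def using member_le_sum_list[of _ "map nverts _"] length_le_sum by fastforce
  then show ?thesis using finite_lists_length_le[OF finite_small] finite_subset by blast
qed

lemma F_00: "F 0 0 = 1"
proof -
  have "Fo 0 0 = {[]}" unfolding Fo_def by auto
  then show ?thesis by (simp add: F_def)
qed

lemma F_n0: "n > 0 \<Longrightarrow> F n 0 = 0"
proof -
  assume "n > 0"
  then have "Fo n 0 = {}" unfolding Fo_def by auto
  then show ?thesis by (simp add: F_def)
qed

lemma F_big: "d > n \<Longrightarrow> F n d = 0"
proof -
  assume "d > n"
  then have "Fo n d = {}" unfolding Fo_def using length_le_sum by (metis (mono_tags, lifting) Collect_empty_eq leD)
  then show ?thesis by (simp add: F_def)
qed

lemma two_cons: "length x \<ge> 2 \<Longrightarrow> \<exists>c t r. x = c # t # r"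
  by (cases x; cases "tl x") auto

definition gm :: "ptree list \<Rightarrow> ptree list" where
  "gm ts = Node (hd ts # principal_subtrees (hd (tl ts))) # tl (tl ts)"

lemma F_rec:
  assumes "n \<ge> 1" "d \<ge> 1"
  shows "F n d = F (n-1) (d-1) + F n (Suc d)"
proof -
  define A where "A = (\<lambda>rs. Node [] # rs) ` Fo (n-1) (d-1)"
  define B where "B = gm ` Fo n (Suc d)"
  have AB: "Fo n d = A \<union> B"
  proof
    show "Fo n d \<subseteq> A \<union> B"
    proof
      fix ts assume ts: "ts \<in> Fo n d"
      then obtain t r where tr: "ts = t # r" using assms unfolding Fo_def
        by (cases ts) auto
      obtain cs where t: "t = Node cs" by (cases t)
      show "ts \<in> A \<union> B"
      proof (cases cs)
        case Nil
        then have "r \<in> Fo (n-1) (d-1)" using ts tr t unfolding Fo_def by auto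
        then show ?thesis unfolding A_def using tr t Nil by blast
      next
        case (Cons c cs')
        have "c # Node cs' # r \<in> Fo n (Suc d)" using ts tr t Cons unfolding Fo_def by auto
        moreover have "gm (c # Node cs' # r) = ts" using tr t Cons by (simp add: gm_def)
        ultimately show ?thesis unfolding B_def by (metis UnI2 image_eqI)
      qed
    qed
  next
    show "A \<union> B \<subseteq> Fo n d"
    proof
      fix ts assume "ts \<in> A \<union> B"
      then show "ts \<in> Fo n d"
      proof
        assume "ts \<in> A" then show ?thesis using assms unfolding A_def Fo_def by auto
      next
        assume "ts \<in> B"
        then obtain x where x: "x \<in> Fo n (Suc d)" "ts = gm x" unfolding B_def by auto
        then obtain c t2 r where "x = c # t2 # r" using assms two_cons[of x] unfolding Fo_def by auto
        with x have "ts = gm (c # t2 # r)" "c # t2 # r \<in> Fo n (Suc d)" by auto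
        moreover obtain cs where "t2 = Node cs" by (cases t2)
        ultimately show ?thesis unfolding Fo_def gm_def by auto
      qed
    qed
  qed
  have disj: "A \<inter> B = {}"
  proof -
    have "\<And>x. x \<in> B \<Longrightarrow> hd x \<noteq> Node []" unfolding B_def gm_def by auto
    moreover have "\<And>x. x \<in> A \<Longrightarrow> hd x = Node []" unfolding A_def by auto
    ultimately show ?thesis by blast
  qed
  have cA: "card A = F (n-1) (d-1)" unfolding A_def F_def
    by (rule card_image) (simp add: inj_on_def)
  have "inj_on gm (Fo n (Suc d))"
  proof (rule inj_onI)
    fix x y assume x: "x \<in> Fo n (Suc d)" and y: "y \<in> Fo n (Suc d)" and e: "gm x = gm y"
    obtain c1 t1 r1 where x': "x = c1 # t1 # r1" using x assms two_cons[of x] unfolding Fo_def by auto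
    obtain c2 t2 r2 where y': "y = c2 # t2 # r2" using y assms two_cons[of y] unfolding Fo_def by auto
    obtain cs1 where "t1 = Node cs1" by (cases t1)
    moreover obtain cs2 where "t2 = Node cs2" by (cases t2)
    ultimately show "x = y" using e x' y' by (simp add: gm_def)
  qed
  then have cB: "card B = F n (Suc d)" unfolding B_def F_def by (rule card_image)
  have "finite A" "finite B" using finite_Fo AB by (metis finite_Un)+
  then have "card (A \<union> B) = card A + card B" using disj by (rule card_Un_disjoint)
  then show ?thesis unfolding F_def[of n d] AB using cA cB by simp
qed

lemma F_nn: "F n n = 1"
proof (induction n)
  case 0 then show ?case by (rule F_00)
next
  case (Suc n)
  have "F (Suc n) (Suc n) = F n n + F (Suc n) (Suc (Suc n))" using F_rec[of "Suc n" "Suc n"] by simp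
  then show ?case using Suc F_big[of "Suc n" "Suc (Suc n)"] by simp
qed

lemma F_binom_aux:
  "1 \<le> n \<Longrightarrow> d \<le> n \<Longrightarrow> int (F n d) = int ((2*n-d-1) choose (n-1)) - int ((2*n-d-1) choose n)"
proof (induction n arbitrary: d)
  case 0 then show ?case by simp
next
  case (Suc n)
  note IHo = Suc.IH
  have main: "\<And>j. j \<le> Suc n \<Longrightarrow> int (F (Suc n) (Suc n - j)) = int ((2*Suc n-(Suc n - j)-1) choose (Suc n-1)) - int ((2*Suc n-(Suc n - j)-1) choose Suc n)"
  proof -
    fix j show "j \<le> Suc n \<Longrightarrow> int (F (Suc n) (Suc n - j)) = int ((2*Suc n-(Suc n - j)-1) choose (Suc n-1)) - int ((2*Suc n-(Suc n - j)-1) choose Suc n)"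
    proof (induction j)
      case 0 then show ?case using F_nn by simp
    next
      case (Suc j)
      define d where "d = Suc n - Suc j"
      have dl: "d < Suc n" "d \<le> n" using Suc.prems d_def by auto
      have d1: "Suc n - j = Suc d" using Suc.prems d_def by auto
      have IHj: "int (F (Suc n) (Suc d)) = int ((2*n - d) choose n) - int ((2*n-d) choose Suc n)"
        using Suc.IH Suc.prems d1 by simp
      show ?case
      proof (cases "d = 0")
        case True
        have "F (Suc n) 0 = 0" by (rule F_n0) simp
        moreover have "(2*Suc n - 1) choose n = (2*Suc n - 1) choose (Suc n)"
          using binomial_symmetric[where k=n and n="2*Suc n - 1"] by simp
        ultimately show ?thesis using True d_def by simp
      next
        case False
        then have n1: "n \<ge> 1" using dl by simp
        have r: "F (Suc n) d = F n (d-1) + F (Suc n) (Suc d)" using F_rec[of "Suc n" d] False by simp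
        have IHn: "int (F n (d-1)) = int ((2*n-d) choose (n-1)) - int ((2*n-d) choose n)"
        proof -
          have "d - 1 \<le> n" using dl by simp
          moreover have "2*n - (d-1) - 1 = 2*n - d" using False dl by simp
          ultimately show ?thesis using IHo[of "d-1"] n1 by simp
        qed
        define q where "q = 2*n - d"
        have M: "2 * Suc n - d - 1 = Suc q" using dl q_def by simp
        have p1: "Suc q choose n = (q choose (n-1)) + (q choose n)"
          using binomial_Suc_Suc[of q "n-1"] n1 by simp
        have p2: "Suc q choose Suc n = (q choose n) + (q choose Suc n)"
          using binomial_Suc_Suc[of q n] by simp
        show ?thesis unfolding d_def[symmetric] using r IHn IHj M p1 p2 q_def by simp
      qed
    qed
  qed
  have "Suc n - (Suc n - d) = d" using Suc.prems by simp
  then show ?case using main[of "Suc n - d"] by simp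
qed

lemma F_closed:
  assumes "1 \<le> d" "d \<le> n"
  shows "real (F n d) = real d * fact (2*n-d-1) / (fact n * fact (n-d))"
proof (cases "d = n")
  case True
  then have "real (F n d) = 1" using F_nn by simp
  moreover have "fact n = real n * fact (n-1)" using assms True
    by (simp add: fact_reduce)
  ultimately show ?thesis using True assms by (simp add: mult_2)
next
  case False
  define M where "M = 2*n-d-1"
  have i: "int (F n d) = int (M choose (n-1)) - int (M choose n)"
    using F_binom_aux[of n d] assms unfolding M_def by simp
  have "real (F n d) = real (M choose (n-1)) - real (M choose n)"
    using arg_cong[OF i, of real_of_int] by simp
  moreover have b1: "fact (n-1) * fact (n-d) * real (M choose (n-1)) = fact M"
  proof -
    have "M - (n-1) = n - d" using assms unfolding M_def by simp
    moreover have "n - 1 \<le> M" using assms unfolding M_def by simp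
    ultimately have "fact (n-1) * fact (n-d) * (M choose (n-1)) = fact M"
      using binomial_fact_lemma[of "n-1" M] by simp
    then have "real (fact (n-1) * fact (n-d) * (M choose (n-1))) = real (fact M)" by simp
    then show ?thesis by (simp only: of_nat_mult of_nat_fact)
  qed
  moreover have b2: "fact n * fact (n-d-1) * real (M choose n) = fact M"
  proof -
    have "M - n = n - d - 1" "n \<le> M" using assms False unfolding M_def by auto
    then have "fact n * fact (n-d-1) * (M choose n) = fact M"
      using binomial_fact_lemma[of n M] by simp
    then have "real (fact n * fact (n-d-1) * (M choose n)) = real (fact M)" by simp
    then show ?thesis by (simp only: of_nat_mult of_nat_fact)
  qed
  moreover have f1: "fact n = real n * fact (n-1)" using assms
    by (simp add: fact_reduce)
  moreover have f2: "fact (n-d) = real (n-d) * fact (n-d-1)" using assms False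
    by (simp add: fact_reduce)
  ultimately have "real (F n d) = (real n - real (n-d)) * fact M / (fact n * fact (n-d))"
  proof -
    assume e: "real (F n d) = real (M choose (n-1)) - real (M choose n)"
    define A where "A = (fact (n-1) :: real) * fact (n-d-1)"
    have Ap: "A > 0" unfolding A_def by simp
    have nd: "real (n-d) > 0" "real n > 0" using assms False by auto
    have c1: "real (M choose (n-1)) = fact M / (real (n-d) * A)"
      using b1 f2 Ap nd by (simp add: A_def field_simps)
    have c2: "real (M choose n) = fact M / (real n * A)"
      using b2 f1 Ap nd by (simp add: A_def field_simps)
    have fn: "fact n * fact (n-d) = real n * real (n-d) * A" using f1 f2 by (simp add: A_def)
    have aux: "\<And>f x y B::real. x > 0 \<Longrightarrow> y > 0 \<Longrightarrow> B > 0 \<Longrightarrow> f/(x*B) - f/(y*B) = (y-x)*f/(y*x*B)"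
      by (simp add: field_simps)
    have "real (F n d) = (real n - real (n-d)) * fact M / (real n * real (n-d) * A)"
      using e c1 c2 aux[OF nd(1) nd(2) Ap] by simp
    then show ?thesis using fn by simp
  qed
  then show ?thesis unfolding M_def using assms by (simp add: of_nat_diff)
qed

definition P :: "nat \<Rightarrow> nat \<Rightarrow> real" where "P m c = (\<Prod>j<c. real (m - j))"

lemma fact_split: "c \<le> m \<Longrightarrow> (fact m :: real) = fact (m - c) * P m c"
proof (induction c)
  case 0 then show ?case by (simp add: P_def)
next
  case (Suc c)
  have "(fact (m - c) :: real) = real (m - c) * fact (m - Suc c)"
    using Suc.prems by (simp add: fact_reduce)
  then show ?case using Suc by (simp add: P_def)
qed

lemma F_pos: "1 \<le> d \<Longrightarrow> d \<le> n \<Longrightarrow> real (F n d) > 0"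
  using F_closed[of d n] by simp

lemma F_ratio:
  assumes "b \<le> a" "b + 1 \<le> d" "a + d \<le> n + b"
  shows "real (F (n-a) (d-b)) / real (F n d)
    = real (d-b) / real d * P n a * P (n-d) (a-b) / P (2*n-d-1) (2*a-b)"
proof -
  have c1: "real (F (n-a) (d-b)) = real (d-b) * fact (2*(n-a)-(d-b)-1) / (fact (n-a) * fact ((n-a)-(d-b)))"
    using F_closed[of "d-b" "n-a"] assms by simp
  have c2: "real (F n d) = real d * fact (2*n-d-1) / (fact n * fact (n-d))"
    using F_closed[of d n] assms by simp
  have s1: "(fact n :: real) = fact (n-a) * P n a" using fact_split[of a n] assms by simp
  have s2: "(fact (n-d) :: real) = fact ((n-a)-(d-b)) * P (n-d) (a-b)"
  proof -
    have "(n-d) - (a-b) = (n-a)-(d-b)" using assms by simp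
    then show ?thesis using fact_split[of "a-b" "n-d"] assms by simp
  qed
  have s3: "(fact (2*n-d-1) :: real) = fact (2*(n-a)-(d-b)-1) * P (2*n-d-1) (2*a-b)"
  proof -
    have "(2*n-d-1) - (2*a-b) = 2*(n-a)-(d-b)-1" using assms by simp
    then show ?thesis using fact_split[of "2*a-b" "2*n-d-1"] assms by simp
  qed
  have Pp: "P n a > 0" "P (n-d) (a-b) > 0" "P (2*n-d-1) (2*a-b) > 0"
    unfolding P_def using assms by (auto intro!: prod_pos)
  have dp: "real d > 0" using assms by simp
  have gen: "\<And>(x::real) y fM fn fnd PM Pn Pnd.  y > 0 \<Longrightarrow> fM > 0 \<Longrightarrow> fn > 0 \<Longrightarrow> fnd > 0 \<Longrightarrow> PM > 0 \<Longrightarrow> Pn > 0 \<Longrightarrow> Pnd > 0 \<Longrightarrow>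
     (x * fM / (fn * fnd)) / (y * (fM * PM) / ((fn * Pn) * (fnd * Pnd))) = x / y * Pn * Pnd / PM"
    by (simp add: field_simps)
  show ?thesis unfolding c1 c2 s1 s2 s3
    by (rule gen) (use Pp dp in auto)
qed

lemma sub_lim:
  assumes "(\<lambda>k. real (m k) / real k) \<longlonglongrightarrow> g"
  shows "(\<lambda>k. real (m k - j) / real k) \<longlonglongrightarrow> g"
proof (rule tendsto_sandwich)
  show "(\<lambda>k. real (m k) / real k - real j / real k) \<longlonglongrightarrow> g"
    using tendsto_diff[OF assms tendsto_divide_0[OF tendsto_const filterlim_at_top_imp_at_infinity[OF filterlim_real_sequentially]], of "real j"]
    by simp
  show "(\<lambda>k. real (m k) / real k) \<longlonglongrightarrow> g" by (rule assms)
  show "\<forall>\<^sub>F k in sequentially. real (m k) / real k - real j / real k \<le> real (m k - j) / real k"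
  proof (rule eventually_mono[OF eventually_gt_at_top[of 0]])
    fix k :: nat assume "k > 0"
    have "real (m k) - real j \<le> real (m k - j)" by (cases "j \<le> m k") (auto simp: of_nat_diff)
    then show "real (m k) / real k - real j / real k \<le> real (m k - j) / real k"
      using \<open>k > 0\<close> by (simp add: diff_divide_distrib[symmetric] divide_right_mono)
  qed
  show "\<forall>\<^sub>F k in sequentially. real (m k - j) / real k \<le> real (m k) / real k"
    by (rule always_eventually) (simp add: divide_right_mono)
qed

lemma P_lim:
  assumes "(\<lambda>k. real (m k) / real k) \<longlonglongrightarrow> g"
  shows "(\<lambda>k. P (m k) c / real k ^ c) \<longlonglongrightarrow> g ^ c"
proof -
  have e: "P (m k) c / real k ^ c = (\<Prod>j<c. real (m k - j) / real k)" for k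
    unfolding P_def by (simp add: prod_dividef)
  have "(\<lambda>k. \<Prod>j<c. real (m k - j) / real k) \<longlonglongrightarrow> (\<Prod>j<c. g)"
    by (rule tendsto_prod) (rule sub_lim[OF assms])
  then show ?thesis unfolding e by simp
qed

lemma at_top_of_ratio:
  assumes "(\<lambda>k. f k / real k) \<longlonglongrightarrow> g" "g > 0"
  shows "filterlim f at_top sequentially"
proof -
  have 1: "filterlim (\<lambda>k. f k / real k * real k) at_top sequentially"
    by (rule filterlim_tendsto_pos_mult_at_top[OF assms filterlim_real_sequentially])
  have 2: "\<forall>\<^sub>F k in sequentially. f k / real k * real k = f k"
    using eventually_gt_at_top[of 0] by eventually_elim simp
  show ?thesis using filterlim_cong[OF refl refl 2] 1 by simp
qed

lemma ratio_lim:
  assumes hn: "(\<lambda>k. real (n k) / real k) \<longlonglongrightarrow> \<alpha>"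
    and hd: "(\<lambda>k. real (d k) / real k) \<longlonglongrightarrow> \<beta>"
    and "0 < \<beta>" "\<beta> < \<alpha>" "b \<le> a"
  shows "(\<lambda>k. real (F (n k - a) (d k - b)) / real (F (n k) (d k)))
      \<longlonglongrightarrow> (\<alpha>-\<beta>)^(a-b) * \<alpha>^a / (2*\<alpha>-\<beta>)^(2*a-b)"
proof -
  have hnd0: "(\<lambda>k. (real (n k) - real (d k)) / real k) \<longlonglongrightarrow> \<alpha> - \<beta>"
    using tendsto_diff[OF hn hd] by (simp add: diff_divide_distrib)
  have dtop: "filterlim (\<lambda>k. real (d k)) at_top sequentially"
    by (rule at_top_of_ratio[OF hd]) (use assms in simp)
  have ndtop: "filterlim (\<lambda>k. real (n k) - real (d k)) at_top sequentially"
    by (rule at_top_of_ratio[OF hnd0]) (use assms in simp)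
  have ev: "\<forall>\<^sub>F k in sequentially. k > 0 \<and> real (d k) \<ge> real b + 1 \<and> real (n k) - real (d k) \<ge> real a + 1"
    using eventually_gt_at_top[of 0] dtop[unfolded filterlim_at_top, rule_format, of "real b + 1"]
      ndtop[unfolded filterlim_at_top, rule_format, of "real a + 1"]
    by eventually_elim auto
  have hnd: "(\<lambda>k. real (n k - d k) / real k) \<longlonglongrightarrow> \<alpha> - \<beta>"
  proof (rule Lim_transform_eventually[OF hnd0])
    show "\<forall>\<^sub>F k in sequentially. (real (n k) - real (d k)) / real k = real (n k - d k) / real k"
      using ev by eventually_elim (simp add: of_nat_diff)
  qed
  have h2: "(\<lambda>k. real (2 * n k - d k) / real k) \<longlonglongrightarrow> 2*\<alpha> - \<beta>"
  proof (rule Lim_transform_eventually[OF tendsto_diff[OF tendsto_mult[OF tendsto_const[of 2] hn] hd]])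
    show "\<forall>\<^sub>F k in sequentially. 2 * (real (n k) / real k) - real (d k) / real k = real (2 * n k - d k) / real k"
      using ev by eventually_elim (simp add: of_nat_diff diff_divide_distrib)
  qed
  have h3: "(\<lambda>k. real (2 * n k - d k - 1) / real k) \<longlonglongrightarrow> 2*\<alpha> - \<beta>"
    by (rule sub_lim[OF h2])
  have hdb: "(\<lambda>k. real (d k - b) / real k) \<longlonglongrightarrow> \<beta>" by (rule sub_lim[OF hd])
  have L: "(\<lambda>k. (real (d k - b) / real k) / (real (d k) / real k) * (P (n k) a / real k ^ a)
        * (P (n k - d k) (a-b) / real k ^ (a-b)) / (P (2 * n k - d k - 1) (2*a-b) / real k ^ (2*a-b)))
      \<longlonglongrightarrow> \<beta> / \<beta> * \<alpha>^a * (\<alpha>-\<beta>)^(a-b) / (2*\<alpha>-\<beta>)^(2*a-b)"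
    by (intro tendsto_intros hdb hd P_lim hn hnd h3) (use assms in auto)
  have bb: "\<beta> / \<beta> = 1" using assms by simp
  have L2: "(\<lambda>k. (real (d k - b) / real k) / (real (d k) / real k) * (P (n k) a / real k ^ a)
        * (P (n k - d k) (a-b) / real k ^ (a-b)) / (P (2 * n k - d k - 1) (2*a-b) / real k ^ (2*a-b)))
      \<longlonglongrightarrow> (\<alpha>-\<beta>)^(a-b) * \<alpha>^a / (2*\<alpha>-\<beta>)^(2*a-b)"
    using L unfolding bb by (simp add: mult.commute)
  show ?thesis
  proof (rule Lim_transform_eventually[OF L2])
    show "\<forall>\<^sub>F k in sequentially. (real (d k - b) / real k) / (real (d k) / real k) * (P (n k) a / real k ^ a)
        * (P (n k - d k) (a-b) / real k ^ (a-b)) / (P (2 * n k - d k - 1) (2*a-b) / real k ^ (2*a-b))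
        = real (F (n k - a) (d k - b)) / real (F (n k) (d k))"
      using ev
    proof eventually_elim
      case (elim k)
      have aa: "a + (a-b) = 2*a-b" using assms by simp
      have kk: "real k ^ a * real k ^ (a-b) = real k ^ (2*a-b)"
        unfolding aa[symmetric] by (simp add: power_add)
      have r: "real (F (n k - a) (d k - b)) / real (F (n k) (d k))
        = real (d k - b) / real (d k) * P (n k) a * P (n k - d k) (a-b) / P (2*n k-d k-1) (2*a-b)"
        by (rule F_ratio) (use elim assms in auto)
      have kp: "real k > 0" using elim by simp
      have dp: "real (d k) > 0" using elim by simp
      have gen: "\<And>x D K Pn Pnd PM Ka Kab :: real. K > 0 \<Longrightarrow> D > 0 \<Longrightarrow> Ka > 0 \<Longrightarrow> Kab > 0 \<Longrightarrow> PM > 0 \<Longrightarrow>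
        (x / K) / (D / K) * (Pn / Ka) * (Pnd / Kab) / (PM / (Ka * Kab)) = x / D * Pn * Pnd / PM"
        by (simp add: field_simps)
      have PMp: "P (2*n k-d k-1) (2*a-b) > 0" unfolding P_def using elim assms by (auto intro!: prod_pos)
      show ?case unfolding r kk[symmetric]
        by (rule gen) (use kp dp PMp in auto)
    qed
  qed
qed

definition ins :: "nat \<Rightarrow> ptree \<Rightarrow> ptree list \<Rightarrow> ptree list" where
  "ins j x rs = take j rs @ x # drop j rs"
definition del :: "nat \<Rightarrow> ptree list \<Rightarrow> ptree list" where
  "del j ts = take j ts @ drop (Suc j) ts"

lemma sum_take_drop: "sum_list (map f (take j xs)) + sum_list (map f (drop j xs)) = sum_list (map f xs)"
  by (metis append_take_drop_id map_append sum_list_append)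

lemma sum_ins: "sum_list (map nverts (ins j x rs)) = sum_list (map nverts rs) + nverts x"
  using sum_take_drop[of nverts j rs] unfolding ins_def by simp

lemma length_ins: "length (ins j x rs) = Suc (length rs)"
  unfolding ins_def by simp

lemma del_ins: "j \<le> length rs \<Longrightarrow> del j (ins j x rs) = rs"
  unfolding ins_def del_def by simp

lemma ins_nth: "j \<le> length rs \<Longrightarrow> ins j x rs ! j = x"
  unfolding ins_def by (simp add: nth_append)

lemma ins_del: "j < length ts \<Longrightarrow> ins j (ts!j) (del j ts) = ts"
  unfolding ins_def del_def using id_take_nth_drop[of j ts] by simp

lemma length_del: "j < length ts \<Longrightarrow> length (del j ts) = length ts - 1"
  unfolding del_def by simp

lemma sum_del: "j < length ts \<Longrightarrow> sum_list (map nverts (del j ts)) + nverts (ts!j) = sum_list (map nverts ts)"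
proof -
  assume j: "j < length ts"
  have "sum_list (map nverts (ins j (ts!j) (del j ts))) = sum_list (map nverts (del j ts)) + nverts (ts!j)"
    by (rule sum_ins)
  then show ?thesis using ins_del[OF j] by simp
qed

lemma card_pos:
  assumes "j < d" "nverts T \<le> n"
  shows "card {ts \<in> Fo n d. ts!j = T \<and> Q (del j ts)} = card {rs \<in> Fo (n - nverts T) (d-1). Q rs}"
proof -
  have "bij_betw (ins j T) {rs \<in> Fo (n - nverts T) (d-1). Q rs} {ts \<in> Fo n d. ts!j = T \<and> Q (del j ts)}"
  proof (rule bij_betw_byWitness[where f'="del j"])
    show "\<forall>a\<in>{rs \<in> Fo (n - nverts T) (d - 1). Q rs}. del j (ins j T a) = a"
      using assms unfolding Fo_def by (auto intro!: del_ins)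
    show "\<forall>a'\<in>{ts \<in> Fo n d. ts ! j = T \<and> Q (del j ts)}. ins j T (del j a') = a'"
      using assms unfolding Fo_def by (auto intro: ins_del[of j, simplified])
    show "ins j T ` {rs \<in> Fo (n - nverts T) (d - 1). Q rs} \<subseteq> {ts \<in> Fo n d. ts ! j = T \<and> Q (del j ts)}"
      using assms unfolding Fo_def by (auto simp: sum_ins length_ins ins_nth del_ins)
    show "del j ` {ts \<in> Fo n d. ts ! j = T \<and> Q (del j ts)} \<subseteq> {rs \<in> Fo (n - nverts T) (d - 1). Q rs}"
    proof
      fix rs assume "rs \<in> del j ` {ts \<in> Fo n d. ts ! j = T \<and> Q (del j ts)}"
      then obtain ts where ts: "ts \<in> Fo n d" "ts!j = T" "Q (del j ts)" "rs = del j ts" by auto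
      have "j < length ts" using ts assms unfolding Fo_def by simp
      then show "rs \<in> {rs \<in> Fo (n - nverts T) (d - 1). Q rs}"
        using ts sum_del[of j ts] length_del[of j ts] unfolding Fo_def by auto
    qed
  qed
  then show ?thesis by (simp add: bij_betw_same_card)
qed

lemma card1:
  assumes "j < d" "nverts T \<le> n"
  shows "card {ts \<in> Fo n d. ts!j = T} = F (n - nverts T) (d-1)"
  using card_pos[OF assms, of "\<lambda>_. True"] unfolding F_def by simp

lemma card2_lt:
  assumes "j < j'" "j' < d" "2 * nverts T \<le> n"
  shows "card {ts \<in> Fo n d. ts!j = T \<and> ts!j' = T} = F (n - 2 * nverts T) (d-2)"
proof -
  have "{ts \<in> Fo n d. ts!j = T \<and> ts!j' = T} = {ts \<in> Fo n d. ts!j' = T \<and> (\<lambda>rs. rs!j = T) (del j' ts)}"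
  proof -
    have "\<And>ts. ts \<in> Fo n d \<Longrightarrow> del j' ts ! j = ts ! j"
      using assms unfolding Fo_def del_def by (auto simp: nth_append)
    then show ?thesis by auto
  qed
  also have "card \<dots> = card {rs \<in> Fo (n - nverts T) (d-1). rs!j = T}"
    by (rule card_pos) (use assms in auto)
  also have "\<dots> = F (n - nverts T - nverts T) (d-1-1)"
    by (rule card1) (use assms in auto)
  also have "d-1-1 = d-2" by simp
  finally show ?thesis by (simp add: mult_2)
qed

lemma card2:
  assumes "j \<noteq> j'" "j < d" "j' < d" "2 * nverts T \<le> n"
  shows "card {ts \<in> Fo n d. ts!j = T \<and> ts!j' = T} = F (n - 2 * nverts T) (d-2)"
proof (cases "j < j'")
  case True then show ?thesis using card2_lt assms by simp
next
  case False
  then have "j' < j" using assms by simp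
  then have "card {ts \<in> Fo n d. ts!j' = T \<and> ts!j = T} = F (n - 2 * nverts T) (d-2)"
    using card2_lt assms by simp
  moreover have "{ts \<in> Fo n d. ts!j' = T \<and> ts!j = T} = {ts \<in> Fo n d. ts!j = T \<and> ts!j' = T}" by auto
  ultimately show ?thesis by simp
qed

lemma count_sum: "real (count_list ts T) = (\<Sum>j<length ts. if ts!j = T then 1 else 0)"
proof (induction ts)
  case Nil then show ?case by simp
next
  case (Cons t ts)
  show ?case using Cons by (simp add: sum.lessThan_Suc_shift del: sum.lessThan_Suc)
qed

lemma sum_ind: "finite A \<Longrightarrow> (\<Sum>x\<in>A. if Q x then 1 else 0 :: real) = real (card {x \<in> A. Q x})"
  by (simp add: sum.If_cases Int_def)

lemma S1:
  assumes "nverts T \<le> n"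
  shows "(\<Sum>ts\<in>Fo n d. real (count_list ts T)) = real d * real (F (n - nverts T) (d-1))"
proof -
  have "(\<Sum>ts\<in>Fo n d. real (count_list ts T)) = (\<Sum>ts\<in>Fo n d. \<Sum>j<d. if ts!j = T then 1 else 0)"
    by (rule sum.cong) (auto simp: count_sum Fo_def)
  also have "\<dots> = (\<Sum>j<d. \<Sum>ts\<in>Fo n d. if ts!j = T then 1 else 0)" by (rule sum.swap)
  also have "\<dots> = (\<Sum>j<d. real (F (n - nverts T) (d-1)))"
    by (rule sum.cong) (auto simp: sum_ind finite_Fo card1 assms)
  finally show ?thesis by simp
qed

lemma S2:
  assumes "2 * nverts T \<le> n"
  shows "(\<Sum>ts\<in>Fo n d. real (count_list ts T)^2)
    = real d * (real (F (n - nverts T) (d-1)) + (real d - 1) * real (F (n - 2 * nverts T) (d-2)))"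
proof -
  define F1 where "F1 = real (F (n - nverts T) (d-1))"
  define F2 where "F2 = real (F (n - 2 * nverts T) (d-2))"
  have "(\<Sum>ts\<in>Fo n d. real (count_list ts T)^2) = (\<Sum>ts\<in>Fo n d. \<Sum>j<d. \<Sum>j'<d. (if ts!j = T \<and> ts!j' = T then 1 else 0))"
  proof (rule sum.cong)
    fix ts assume "ts \<in> Fo n d"
    then have l: "length ts = d" by (simp add: Fo_def)
    have "real (count_list ts T)^2 = (\<Sum>j<d. if ts!j = T then 1 else 0) * (\<Sum>j'<d. if ts!j' = T then 1 else (0::real))"
      using l by (simp add: count_sum power2_eq_square)
    also have "\<dots> = (\<Sum>j<d. \<Sum>j'<d. (if ts!j = T then 1 else 0) * (if ts!j' = T then 1 else (0::real)))"
      by (simp add: sum_product)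
    also have "\<dots> = (\<Sum>j<d. \<Sum>j'<d. (if ts!j = T \<and> ts!j' = T then 1 else 0))"
      by (intro sum.cong refl) simp
    finally show "real (count_list ts T)^2 = (\<Sum>j<d. \<Sum>j'<d. (if ts!j = T \<and> ts!j' = T then 1 else 0))" .
  qed simp
  also have "\<dots> = (\<Sum>j<d. \<Sum>j'<d. \<Sum>ts\<in>Fo n d. (if ts!j = T \<and> ts!j' = T then 1 else 0))"
    by (simp add: sum.swap[of _ "Fo n d"])
  also have "\<dots> = (\<Sum>j<d. \<Sum>j'<d. if j' = j then F1 else F2)"
  proof (intro sum.cong refl)
    fix j j' assume j: "j \<in> {..<d}" and j': "j' \<in> {..<d}"
    show "(\<Sum>ts\<in>Fo n d. (if ts!j = T \<and> ts!j' = T then 1 else 0)) = (if j' = j then F1 else F2)"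
    proof (cases "j' = j")
      case True
      then show ?thesis using j assms by (simp add: sum_ind finite_Fo card1 F1_def)
    next
      case False
      then show ?thesis using j j' assms by (simp add: sum_ind finite_Fo card2 F2_def)
    qed
  qed
  also have "\<dots> = (\<Sum>j<d. F1 + (real d - 1) * F2)"
  proof (rule sum.cong[OF refl])
    fix j assume j: "j \<in> {..<d}"
    have "(\<Sum>j'<d. if j' = j then F1 else F2) = (\<Sum>j'<d. F2 + (if j' = j then F1 - F2 else 0))"
      by (rule sum.cong) auto
    also have "\<dots> = real d * F2 + (F1 - F2)" using j by (simp add: sum.distrib)
    finally show "(\<Sum>j'<d. if j' = j then F1 else F2) = F1 + (real d - 1) * F2" by (simp add: algebra_simps)
  qed
  finally show ?thesis by (simp add: F1_def F2_def)
qed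

lemma trees_with_eq: "trees_with (Suc n) d = Node ` Fo n d"
proof
  show "trees_with (Suc n) d \<subseteq> Node ` Fo n d"
  proof
    fix t assume "t \<in> trees_with (Suc n) d"
    moreover obtain ts where "t = Node ts" by (cases t)
    ultimately show "t \<in> Node ` Fo n d" unfolding trees_with_def Fo_def root_degree_def by auto
  qed
  show "Node ` Fo n d \<subseteq> trees_with (Suc n) d"
    unfolding trees_with_def Fo_def root_degree_def by auto
qed

lemma cheb:
  assumes "finite A" "e > 0"
  shows "real (card {x \<in> A. \<not> \<bar>Y x - m\<bar> \<le> e}) * e^2 \<le> (\<Sum>x\<in>A. (Y x - m)^2)"
proof -
  have "real (card {x \<in> A. \<not> \<bar>Y x - m\<bar> \<le> e}) * e^2 = (\<Sum>x\<in>{x \<in> A. \<not> \<bar>Y x - m\<bar> \<le> e}. e^2)"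
    by simp
  also have "\<dots> \<le> (\<Sum>x\<in>{x \<in> A. \<not> \<bar>Y x - m\<bar> \<le> e}. (Y x - m)^2)"
  proof (rule sum_mono)
    fix x assume "x \<in> {x \<in> A. \<not> \<bar>Y x - m\<bar> \<le> e}"
    then have "e \<le> \<bar>Y x - m\<bar>" by simp
    then have "e^2 \<le> \<bar>Y x - m\<bar>^2" using assms by (intro power_mono) auto
    then show "e^2 \<le> (Y x - m)^2" by simp
  qed
  also have "\<dots> \<le> (\<Sum>x\<in>A. (Y x - m)^2)"
    by (rule sum_mono2) (use assms in auto)
  finally show ?thesis .
qed

lemma step:
  fixes \<mu> e :: real
  assumes "2 \<le> d" "2 * nverts T \<le> n" "d \<le> n" "e > 0"
    and V: "real (F (n - nverts T) (d-1)) / real (F n d) / real d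
       + (real d - 1) / real d * (real (F (n - 2 * nverts T) (d-2)) / real (F n d))
       - 2 * \<mu> * (real (F (n - nverts T) (d-1)) / real (F n d)) + \<mu>^2 < e^3"
  shows "measure_pmf.prob (pmf_of_set (trees_with (Suc n) d))
      {t. \<bar>beta_frac d T t - \<mu>\<bar> \<le> e} > 1 - e"
proof -
  define \<Omega> where "\<Omega> = trees_with (Suc n) d"
  define F0 where "F0 = real (F n d)"
  define F1 where "F1 = real (F (n - nverts T) (d-1))"
  define F2 where "F2 = real (F (n - 2 * nverts T) (d-2))"
  have F0p: "F0 > 0" unfolding F0_def using F_pos assms by simp
  have Om: "\<Omega> = Node ` Fo n d" unfolding \<Omega>_def by (rule trees_with_eq)
  have inj: "inj_on Node (Fo n d)" by (simp add: inj_on_def)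
  have fin: "finite \<Omega>" unfolding Om using finite_Fo by simp
  have cardO: "real (card \<Omega>) = F0" unfolding Om F0_def F_def using card_image[OF inj] by simp
  have ne: "\<Omega> \<noteq> {}" using cardO F0p by auto
  have dp: "real d > 0" using assms by simp
  have i1: "nverts T \<le> n" using assms by simp
  have sumO: "(\<Sum>t\<in>\<Omega>. (beta_frac d T t - \<mu>)^2) = (\<Sum>ts\<in>Fo n d. (real (count_list ts T) / real d - \<mu>)^2)"
    unfolding Om by (simp add: sum.reindex[OF inj] beta_frac_def)
  also have "\<dots> = (\<Sum>ts\<in>Fo n d. real (count_list ts T)^2 / real d^2 - (2 * \<mu> / real d) * real (count_list ts T) + \<mu>^2)"
    by (rule sum.cong) (use dp in \<open>auto simp: power2_eq_square field_simps\<close>)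
  also have "\<dots> = (\<Sum>ts\<in>Fo n d. real (count_list ts T)^2) / real d^2 - (2 * \<mu> / real d) * (\<Sum>ts\<in>Fo n d. real (count_list ts T)) + \<mu>^2 * F0"
    by (simp add: sum.distrib sum_subtractf sum_divide_distrib[symmetric] sum_distrib_left[symmetric] F0_def F_def)
  also have "\<dots> = real d * (F1 + (real d - 1) * F2) / real d^2 - (2 * \<mu> / real d) * (real d * F1) + \<mu>^2 * F0"
    using S1[OF i1, of d] S2[OF assms(2), of d] by (simp add: F1_def F2_def)
  also have "\<dots> = F0 * (F1 / F0 / real d + (real d - 1) / real d * (F2 / F0) - 2 * \<mu> * (F1 / F0) + \<mu>^2)"
    using dp F0p by (simp add: field_simps power2_eq_square)
  finally have sumV: "(\<Sum>t\<in>\<Omega>. (beta_frac d T t - \<mu>)^2) = F0 * (F1 / F0 / real d + (real d - 1) / real d * (F2 / F0) - 2 * \<mu> * (F1 / F0) + \<mu>^2)" .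
  define bad where "bad = {t \<in> \<Omega>. \<not> \<bar>beta_frac d T t - \<mu>\<bar> \<le> e}"
  have "real (card bad) * e^2 \<le> F0 * (F1 / F0 / real d + (real d - 1) / real d * (F2 / F0) - 2 * \<mu> * (F1 / F0) + \<mu>^2)"
    unfolding bad_def sumV[symmetric] by (rule cheb[OF fin assms(4)])
  also have "\<dots> < F0 * e^3" using V F0p unfolding F0_def F1_def F2_def by simp
  finally have "real (card bad) * e^2 < (F0 * e) * e^2" by (simp add: power3_eq_cube power2_eq_square algebra_simps)
  then have badlt: "real (card bad) < F0 * e" using assms(4) by (simp add: mult_less_cancel_right)
  have "card (\<Omega> \<inter> {t. \<bar>beta_frac d T t - \<mu>\<bar> \<le> e}) + card bad = card \<Omega>"
  proof -
    have "\<Omega> = (\<Omega> \<inter> {t. \<bar>beta_frac d T t - \<mu>\<bar> \<le> e}) \<union> bad" unfolding bad_def by auto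
    moreover have "(\<Omega> \<inter> {t. \<bar>beta_frac d T t - \<mu>\<bar> \<le> e}) \<inter> bad = {}" unfolding bad_def by auto
    ultimately show ?thesis using fin card_Un_disjoint
      by (metis finite_Int finite_Un)
  qed
  then have cg: "real (card (\<Omega> \<inter> {t. \<bar>beta_frac d T t - \<mu>\<bar> \<le> e})) = F0 - real (card bad)"
    using cardO by (metis add_diff_cancel_right' of_nat_add)
  have "measure_pmf.prob (pmf_of_set \<Omega>) {t. \<bar>beta_frac d T t - \<mu>\<bar> \<le> e}
      = (F0 - real (card bad)) / F0"
    using measure_pmf_of_set[OF ne fin] cg cardO by simp
  also have "\<dots> > 1 - e" using badlt F0p by (simp add: field_simps)
  finally show ?thesis unfolding \<Omega>_def .
qed

lemma ceil_lim:
  fixes c :: real assumes "c \<ge> 0"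
  shows "(\<lambda>k. real (nat \<lceil>c * real k\<rceil>) / real k) \<longlonglongrightarrow> c"
proof (rule tendsto_sandwich)
  show "(\<lambda>k. c) \<longlonglongrightarrow> c" by simp
  show "(\<lambda>k. c + 1 / real k) \<longlonglongrightarrow> c"
    using tendsto_add[OF tendsto_const[of c] tendsto_divide_0[OF tendsto_const filterlim_at_top_imp_at_infinity[OF filterlim_real_sequentially]], of 1]
    by simp
  have e: "real (nat \<lceil>c * real k\<rceil>) = of_int \<lceil>c * real k\<rceil>" for k
    using assms by (simp add: of_nat_nat)
  show "\<forall>\<^sub>F k in sequentially. c \<le> real (nat \<lceil>c * real k\<rceil>) / real k"
  proof (rule eventually_mono[OF eventually_gt_at_top[of 0]])
    fix k :: nat assume k: "k > 0"
    have "c * real k \<le> of_int \<lceil>c * real k\<rceil>" by (rule le_of_int_ceiling)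
    then show "c \<le> real (nat \<lceil>c * real k\<rceil>) / real k" unfolding e using k by (simp add: field_simps)
  qed
  show "\<forall>\<^sub>F k in sequentially. real (nat \<lceil>c * real k\<rceil>) / real k \<le> c + 1 / real k"
  proof (rule eventually_mono[OF eventually_gt_at_top[of 0]])
    fix k :: nat assume k: "k > 0"
    have "of_int \<lceil>c * real k\<rceil> \<le> c * real k + 1" by (rule of_int_ceiling_le_add_one)
    then show "real (nat \<lceil>c * real k\<rceil>) / real k \<le> c + 1 / real k" unfolding e using k by (simp add: field_simps)
  qed
qed

theorem proposition5:
  fixes lam \<delta> :: real and T :: ptree
  assumes "lam > 0" and "0 < \<delta>" and "\<delta> < 1"
  shows "\<forall>\<epsilon>>0. \<exists>K. \<forall>k::nat\<ge>K.
    measure_pmf.prob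
      (pmf_of_set (trees_with (nat \<lceil>lam * real k\<rceil>) (nat \<lceil>\<delta> * lam * real k\<rceil>)))
      {t. \<bar>beta_frac (nat \<lceil>\<delta> * lam * real k\<rceil>) T t
            - (1 - \<delta>) ^ (nverts T - 1) / (2 - \<delta>) ^ (2 * nverts T - 1)\<bar> \<le> \<epsilon>}
    > 1 - \<epsilon>"
proof (intro allI impI)
  fix e :: real assume e: "e > 0"
  define i where "i = nverts T"
  have i1: "i \<ge> 1" unfolding i_def by (rule nverts_pos)
  define \<mu> where "\<mu> = (1 - \<delta>) ^ (i - 1) / (2 - \<delta>) ^ (2 * i - 1)"
  define n where "n = (\<lambda>k::nat. nat \<lceil>lam * real k\<rceil> - 1)"
  define d where "d = (\<lambda>k::nat. nat \<lceil>\<delta> * lam * real k\<rceil>)"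
  have hn: "(\<lambda>k. real (n k) / real k) \<longlonglongrightarrow> lam"
    unfolding n_def by (rule sub_lim[OF ceil_lim]) (use assms in simp)
  have hd: "(\<lambda>k. real (d k) / real k) \<longlonglongrightarrow> \<delta> * lam"
    unfolding d_def by (rule ceil_lim) (use assms in simp)
  have db: "0 < \<delta> * lam" "\<delta> * lam < lam" using assms by auto
  have r1: "(\<lambda>k. real (F (n k - i) (d k - 1)) / real (F (n k) (d k)))
     \<longlonglongrightarrow> (lam - \<delta> * lam)^(i-1) * lam^i / (2*lam - \<delta> * lam)^(2*i-1)"
    using ratio_lim[OF hn hd db, of 1 i] i1 by simp
  have r2: "(\<lambda>k. real (F (n k - 2*i) (d k - 2)) / real (F (n k) (d k)))
     \<longlonglongrightarrow> (lam - \<delta> * lam)^(2*i-2) * lam^(2*i) / (2*lam - \<delta> * lam)^(2*(2*i)-2)"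
    using ratio_lim[OF hn hd db, of 2 "2*i"] i1 by simp
  have pw: "\<And>a b. b \<le> a \<Longrightarrow> (lam - \<delta> * lam)^(a-b) * lam^a / (2*lam - \<delta> * lam)^(2*a-b)
       = (1-\<delta>)^(a-b) / (2-\<delta>)^(2*a-b)"
  proof -
    fix a b :: nat assume ab: "b \<le> a"
    have e1: "(lam - \<delta> * lam) = lam * (1-\<delta>)" "2*lam - \<delta> * lam = lam * (2-\<delta>)" by (simp_all add: algebra_simps)
    have e2: "lam^(a-b) * lam^a = lam^(2*a-b)"
    proof -
      have "a - b + a = 2*a-b" using ab by simp
      then show ?thesis by (metis power_add)
    qed
    have "(lam - \<delta> * lam)^(a-b) * lam^a / (2*lam - \<delta> * lam)^(2*a-b)
        = (lam^(a-b) * lam^a) * (1-\<delta>)^(a-b) / (lam^(2*a-b) * (2-\<delta>)^(2*a-b))"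
      unfolding e1 by (simp add: power_mult_distrib)
    also have "\<dots> = (1-\<delta>)^(a-b) / (2-\<delta>)^(2*a-b)" unfolding e2 using assms by simp
    finally show "(lam - \<delta> * lam)^(a-b) * lam^a / (2*lam - \<delta> * lam)^(2*a-b)
       = (1-\<delta>)^(a-b) / (2-\<delta>)^(2*a-b)" .
  qed
  have r1': "(\<lambda>k. real (F (n k - i) (d k - 1)) / real (F (n k) (d k))) \<longlonglongrightarrow> \<mu>"
    using r1 pw[of 1 i] i1 unfolding \<mu>_def by simp
  have mu2: "\<mu>^2 = (1-\<delta>)^(2*i-2) / (2-\<delta>)^(2*(2*i)-2)"
  proof -
    have "2*i-2 = (i-1)*2" "2*(2*i)-2 = (2*i-1)*2" using i1 by auto
    then show ?thesis unfolding \<mu>_def by (simp add: power_divide power_mult[symmetric])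
  qed
  have r2': "(\<lambda>k. real (F (n k - 2*i) (d k - 2)) / real (F (n k) (d k))) \<longlonglongrightarrow> \<mu>^2"
    using r2 pw[of 2 "2*i"] i1 unfolding mu2 by simp
  have dtop: "filterlim (\<lambda>k. real (d k)) at_top sequentially"
    by (rule at_top_of_ratio[OF hd]) (use assms in simp)
  have inv0: "(\<lambda>k. 1 / real (d k)) \<longlonglongrightarrow> 0"
    by (rule tendsto_divide_0[OF tendsto_const filterlim_at_top_imp_at_infinity[OF dtop]])
  have V: "(\<lambda>k. real (F (n k - i) (d k - 1)) / real (F (n k) (d k)) / real (d k)
       + (1 - 1 / real (d k)) * (real (F (n k - 2*i) (d k - 2)) / real (F (n k) (d k)))
       - 2 * \<mu> * (real (F (n k - i) (d k - 1)) / real (F (n k) (d k))) + \<mu>^2)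
     \<longlonglongrightarrow> \<mu> * 0 + (1 - 0) * \<mu>^2 - 2 * \<mu> * \<mu> + \<mu>^2"
  proof -
    have t1: "(\<lambda>k. real (F (n k - i) (d k - 1)) / real (F (n k) (d k)) / real (d k)) \<longlonglongrightarrow> \<mu> * 0"
      using tendsto_mult[OF r1' inv0] by simp
    show ?thesis
      by (rule tendsto_add[OF tendsto_diff[OF tendsto_add[OF t1 tendsto_mult[OF tendsto_diff[OF tendsto_const inv0] r2']] tendsto_mult[OF tendsto_const r1']] tendsto_const])
  qed
  have V0: "\<mu> * 0 + (1 - 0) * \<mu>^2 - 2 * \<mu> * \<mu> + \<mu>^2 = 0" by (simp add: power2_eq_square)
  have e3: "e^3 > 0" using e by simp
  have evV: "\<forall>\<^sub>F k in sequentially. real (F (n k - i) (d k - 1)) / real (F (n k) (d k)) / real (d k)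
       + (1 - 1 / real (d k)) * (real (F (n k - 2*i) (d k - 2)) / real (F (n k) (d k)))
       - 2 * \<mu> * (real (F (n k - i) (d k - 1)) / real (F (n k) (d k))) + \<mu>^2 < e^3"
    using order_tendstoD(2)[OF V[unfolded V0] e3] .
  have hnd0: "(\<lambda>k. (real (n k) - real (d k)) / real k) \<longlonglongrightarrow> lam - \<delta> * lam"
    using tendsto_diff[OF hn hd] by (simp add: diff_divide_distrib)
  have ndtop: "filterlim (\<lambda>k. real (n k) - real (d k)) at_top sequentially"
    by (rule at_top_of_ratio[OF hnd0]) (use db in simp)
  have ev: "\<forall>\<^sub>F k in sequentially. real (d k) \<ge> 2 \<and> real (n k) - real (d k) \<ge> real (2*i)"
    using dtop[unfolded filterlim_at_top, rule_format, of 2]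
      ndtop[unfolded filterlim_at_top, rule_format, of "real (2*i)"]
    by eventually_elim auto
  have ev2: "\<forall>\<^sub>F k in sequentially. k > 0 \<and> real (d k) \<ge> 2 \<and> real (n k) - real (d k) \<ge> real (2*i) \<and>
       real (F (n k - i) (d k - 1)) / real (F (n k) (d k)) / real (d k)
       + (1 - 1 / real (d k)) * (real (F (n k - 2*i) (d k - 2)) / real (F (n k) (d k)))
       - 2 * \<mu> * (real (F (n k - i) (d k - 1)) / real (F (n k) (d k))) + \<mu>^2 < e^3"
    using eventually_gt_at_top[of 0] ev evV by eventually_elim auto
  then obtain K where K: "\<And>k. k \<ge> K \<Longrightarrow> k > 0 \<and> real (d k) \<ge> 2 \<and> real (n k) - real (d k) \<ge> real (2*i) \<and>
       real (F (n k - i) (d k - 1)) / real (F (n k) (d k)) / real (d k)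
       + (1 - 1 / real (d k)) * (real (F (n k - 2*i) (d k - 2)) / real (F (n k) (d k)))
       - 2 * \<mu> * (real (F (n k - i) (d k - 1)) / real (F (n k) (d k))) + \<mu>^2 < e^3"
    unfolding eventually_sequentially by blast
  show "\<exists>K. \<forall>k\<ge>K. measure_pmf.prob
      (pmf_of_set (trees_with (nat \<lceil>lam * real k\<rceil>) (nat \<lceil>\<delta> * lam * real k\<rceil>)))
      {t. \<bar>beta_frac (nat \<lceil>\<delta> * lam * real k\<rceil>) T t
            - (1 - \<delta>) ^ (nverts T - 1) / (2 - \<delta>) ^ (2 * nverts T - 1)\<bar> \<le> e}
    > 1 - e"
  proof (intro exI allI impI)
    fix k assume "k \<ge> K"
    note Kk = K[OF this]
    have c1: "2 \<le> d k" "2 * i \<le> n k" "d k \<le> n k" using Kk by auto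
    have l: "nat \<lceil>lam * real k\<rceil> = Suc (n k)"
    proof -
      have "lam * real k > 0" using Kk assms by simp
      then have "nat \<lceil>lam * real k\<rceil> \<ge> 1" by linarith
      then show ?thesis unfolding n_def by simp
    qed
    have V': "real (F (n k - i) (d k - 1)) / real (F (n k) (d k)) / real (d k)
       + (real (d k) - 1) / real (d k) * (real (F (n k - 2 * i) (d k - 2)) / real (F (n k) (d k)))
       - 2 * \<mu> * (real (F (n k - i) (d k - 1)) / real (F (n k) (d k))) + \<mu>^2 < e^3"
    proof -
      have "(real (d k) - 1) / real (d k) = 1 - 1 / real (d k)" using c1 by (simp add: field_simps)
      then show ?thesis using Kk by simp
    qed
    have "measure_pmf.prob (pmf_of_set (trees_with (Suc (n k)) (d k)))
      {t. \<bar>beta_frac (d k) T t - \<mu>\<bar> \<le> e} > 1 - e"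
      by (rule step) (use c1 e V' i_def in auto)
    then show "measure_pmf.prob
      (pmf_of_set (trees_with (nat \<lceil>lam * real k\<rceil>) (nat \<lceil>\<delta> * lam * real k\<rceil>)))
      {t. \<bar>beta_frac (nat \<lceil>\<delta> * lam * real k\<rceil>) T t
            - (1 - \<delta>) ^ (nverts T - 1) / (2 - \<delta>) ^ (2 * nverts T - 1)\<bar> \<le> e}
    > 1 - e" unfolding l using d_def \<mu>_def i_def by simp
  qed
qed

end
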